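(* Let $X=\{0,1,2,3\}$, $s_1=(0\,3\,2)$, $s_2=(0\,1\,3)$, $s_3=s_2^{-1}=(0\,3\,1)$, $A=\langle s_1,s_2,s_3\rangle\cong\mathrm{Alt}(4)$, and let $b\in\mathrm{St}(1)$ be the automorphism of $X^*$ with $b|_0=b$, $b|_1=s_1$, $b|_2=s_2$, $b|_3=s_3$; let $B=\langle b\rangle$ (of order $3$) and $G=\langle A\cup B\rangle$. Then for each $b'\in\{b,b^2\}$ the map $\lambda_{b'}:A\to A$ is eventually trivial (for every $a\in A$ some iterate $\lambda_{b'}^n(a)$ equals $1_A$), but the element $g=s_3s_1bs_3b$ has infinite order; in particular $G$ is not periodic.
   Context: $X^*$ is the free monoid on $X$ viewed as a rooted tree; $\mathrm{Aut}(X^* )$ acts on the right ($gh$ = first $g$ then $h$, so permutations compose left to right); sections $g|_u$ are defined by $(u\star v).g=u.g\star v.(g|_u)$; permutations of $X$ act as rooted automorphisms $(x\star v).\rho=x.\rho\star v$; $\mathrm{St}(1)$ is the first layer stabiliser. For $a\in A$ let $\ell_a(0)$ be the length of the $\langle a\rangle$-orbit of $0$, and for $b'\in B$ let $\lambda_{b'}(a)=b'|_{0.a}\,b'|_{0.a^2}\cdots b'|_{0.a^{\ell_a(0)-1}}$. *)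

theory Defs
  imports Main "HOL-Library.Numeral_Type"
begin

text \<open>The group acts on the right:
the product gh (first g, then h) is the function h o g.\<close>

type_synonym letter = 4
type_synonym word = "4 list"
type_synonym aut = "word \<Rightarrow> word"

definition gmul :: "aut \<Rightarrow> aut \<Rightarrow> aut" (infixl "\<cdot>" 70) where
  "g \<cdot> h = h \<circ> g"

text \<open>Sections: (u v).g = u.g (v.(g|_u)).\<close>
definition sec :: "aut \<Rightarrow> word \<Rightarrow> aut" where
  "sec g u = (\<lambda>v. drop (length u) (g (u @ v)))"

definition lact :: "aut \<Rightarrow> letter \<Rightarrow> letter" where
  "lact g x = hd (g [x])"

fun rooted :: "(letter \<Rightarrow> letter) \<Rightarrow> aut" where
  "rooted \<rho> [] = []"
| "rooted \<rho> (x # v) = \<rho> x # v"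

definition cyc3 :: "letter \<Rightarrow> letter \<Rightarrow> letter \<Rightarrow> letter \<Rightarrow> letter" where
  "cyc3 p q r x = (if x = p then q else if x = q then r else if x = r then p else x)"

definition s1 :: aut where "s1 = rooted (cyc3 0 3 2)"
definition s2 :: aut where "s2 = rooted (cyc3 0 1 3)"
definition s3 :: aut where "s3 = rooted (cyc3 0 3 1)"

fun bb :: aut where
  "bb [] = []"
| "bb (x # v) = x # (if x = 0 then bb v else if x = 1 then s1 v else if x = 2 then s2 v else s3 v)"

inductive_set gen :: "aut set \<Rightarrow> aut set" for S where
  gen_id: "id \<in> gen S"
| gen_gen: "g \<in> S \<Longrightarrow> g \<in> gen S"
| gen_inv: "g \<in> S \<Longrightarrow> inv g \<in> gen S"
| gen_mul: "g \<in> gen S \<Longrightarrow> h \<in> gen S \<Longrightarrow> g \<cdot> h \<in> gen S"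

definition AA :: "aut set" where "AA = gen {s1, s2, s3}"
definition BB :: "aut set" where "BB = gen {bb}"
definition GG :: "aut set" where "GG = gen (AA \<union> BB)"

definition orblen :: "aut \<Rightarrow> nat" where
  "orblen a = (LEAST k. 0 < k \<and> lact (a ^^ k) 0 = 0)"

text \<open>lambda_{b'}(a) = b'|_{0.a} b'|_{0.a^2} ... b'|_{0.a^(l-1)} (product in right-action order).\<close>
definition lam :: "aut \<Rightarrow> aut \<Rightarrow> aut" where
  "lam b' a = foldl (\<cdot>) id (map (\<lambda>k. sec b' [lact (a ^^ k) 0]) [1..<orblen a])"

definition periodic :: "aut set \<Rightarrow> bool" where
  "periodic H \<longleftrightarrow> (\<forall>h\<in>H. \<exists>n>0. h ^^ n = id)"

end

theory Submission imports Defs begin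

lemma L4: "(x::4) = 0 \<or> x = 1 \<or> x = 2 \<or> x = 3"
proof (cases x)
  case (of_int z)
  then have "z = 0 \<or> z = 1 \<or> z = 2 \<or> z = 3" by auto
  then show ?thesis using of_int by auto
qed

lemma rooted_comp: "rooted \<sigma> \<circ> rooted \<rho> = rooted (\<sigma> \<circ> \<rho>)"
  by (rule ext, case_tac x) auto
lemma rooted_id: "rooted id = id" by (rule ext, case_tac x) auto
lemma rooted_mul: "rooted \<rho> \<cdot> rooted \<sigma> = rooted (\<sigma> \<circ> \<rho>)"
  by (simp add: gmul_def rooted_comp)
lemma rooted_pow: "rooted \<rho> ^^ k = rooted (\<rho> ^^ k)"
  by (induct k) (simp_all only: funpow.simps rooted_id rooted_comp)
lemma lact_rooted: "lact (rooted \<rho>) x = \<rho> x" by (simp add: lact_def)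

lemma cyc3_inv: "distinct [p,q,r] \<Longrightarrow> cyc3 p q r \<circ> cyc3 p r q = id"
  by (rule ext) (auto simp: cyc3_def)
lemma bij_cyc3: assumes "distinct [p,q,r]" shows "bij (cyc3 p q r)"
proof -
  have "cyc3 p q r \<circ> cyc3 p r q = id" "cyc3 p r q \<circ> cyc3 p q r = id"
    using cyc3_inv[of p q r] cyc3_inv[of p r q] assms by auto
  then show ?thesis by (metis o_bij)
qed

lemma inv_rooted: assumes "bij \<rho>" shows "inv (rooted \<rho>) = rooted (inv \<rho>)"
proof (rule inv_unique_comp)
  have "\<rho> \<circ> inv \<rho> = id" using assms bij_is_surj surj_iff by blast
  then show "rooted \<rho> \<circ> rooted (inv \<rho>) = id" by (simp add: rooted_comp rooted_id)
  have "inv \<rho> \<circ> \<rho> = id" using assms bij_is_inj inj_iff by blast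
  then show "rooted (inv \<rho>) \<circ> rooted \<rho> = id" by (simp add: rooted_comp rooted_id)
qed

lemma gen_rooted:
  assumes "a \<in> gen S" "\<forall>s\<in>S. \<exists>\<rho>. bij \<rho> \<and> s = rooted \<rho>"
  shows "\<exists>\<rho>. bij \<rho> \<and> a = rooted \<rho>"
  using assms(1)
proof induct
  case gen_id show ?case using rooted_id bij_id by metis
next
  case (gen_gen g) then show ?case using assms(2) by blast
next
  case (gen_inv g)
  then obtain \<rho> where "bij \<rho>" "g = rooted \<rho>" using assms(2) by blast
  then show ?case by (intro exI[of _ "inv \<rho>"]) (simp add: inv_rooted bij_imp_bij_inv)
next
  case (gen_mul g h)
  then obtain \<rho> \<sigma> where "bij \<rho>" "g = rooted \<rho>" "bij \<sigma>" "h = rooted \<sigma>" by blast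
  then show ?case by (metis rooted_mul bij_comp)
qed

lemma AA_rooted: "a \<in> AA \<Longrightarrow> \<exists>\<rho>. bij \<rho> \<and> a = rooted \<rho>"
  unfolding AA_def
  apply (rule gen_rooted, assumption)
  using bij_cyc3[of 0 3 2] bij_cyc3[of 0 1 3] bij_cyc3[of 0 3 1] by (auto simp: s1_def s2_def s3_def)

definition spb :: "letter \<Rightarrow> letter \<Rightarrow> letter" where
  "spb x = (if x = 1 then cyc3 0 3 2 else if x = 2 then cyc3 0 1 3 else cyc3 0 3 1)"
definition spb2 :: "letter \<Rightarrow> letter \<Rightarrow> letter" where
  "spb2 x = spb x \<circ> spb x"

lemma sec_bb: "x \<noteq> 0 \<Longrightarrow> sec bb [x] = rooted (spb x)"
  by (rule ext) (simp add: sec_def spb_def s1_def s2_def s3_def)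

lemma sec_bb2: assumes "x \<noteq> 0" shows "sec (bb \<cdot> bb) [x] = rooted (spb2 x)"
proof -
  have "sec (bb \<cdot> bb) [x] = sec bb [x] \<circ> sec bb [x]"
    by (rule ext) (simp add: sec_def gmul_def)
  then show ?thesis using assms by (simp add: sec_bb spb2_def rooted_comp)
qed

lemma bij_spb: "bij (spb x)" by (simp add: spb_def bij_cyc3)
lemma bij_spb2: "bij (spb2 x)" by (simp add: spb2_def bij_spb bij_comp)

lemma spb_AA: "rooted (spb x) \<in> AA"
  unfolding AA_def by (rule gen_gen) (simp add: spb_def s1_def s2_def s3_def)
lemma spb2_AA: "rooted (spb2 x) \<in> AA"
  unfolding spb2_def rooted_mul[symmetric] AA_def
  by (rule gen_mul; rule gen_gen) (simp_all add: spb_def s1_def s2_def s3_def)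

definition Psi :: "(letter \<Rightarrow> letter \<Rightarrow> letter) \<Rightarrow> letter \<Rightarrow> letter \<Rightarrow> letter \<Rightarrow> letter \<Rightarrow> letter" where
  "Psi sp p q r = (if p = 0 then id else if q = 0 then sp p else if r = 0 then sp q \<circ> sp p
     else sp r \<circ> sp q \<circ> sp p)"
definition Phi :: "(letter \<Rightarrow> letter \<Rightarrow> letter) \<Rightarrow> (letter \<Rightarrow> letter) \<Rightarrow> letter \<Rightarrow> letter" where
  "Phi sp \<rho> = Psi sp (\<rho> 0) (\<rho> (\<rho> 0)) (\<rho> (\<rho> (\<rho> 0)))"


lemma fin_b: "(Phi spb ^^ 6) (Psi spb p q r) = id"
  using L4[of p] L4[of q] L4[of r]
  apply (elim disjE)
  by (simp_all add: eval_nat_numeral Phi_def Psi_def spb_def cyc3_def cyc3_inv)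

lemma cyc_aux: "cyc3 0 3 1 \<circ> cyc3 0 3 1 \<circ> (cyc3 0 1 3 \<circ> cyc3 0 1 3) = (id::letter\<Rightarrow>letter)"
proof (rule ext)
  fix x :: letter show "(cyc3 0 3 1 \<circ> cyc3 0 3 1 \<circ> (cyc3 0 1 3 \<circ> cyc3 0 1 3)) x = id x"
    using L4[of x] by (auto simp: cyc3_def)
qed

lemma fin_b2: "(Phi spb2 ^^ 6) (Psi spb2 p q r) = id"
  using L4[of p] L4[of q] L4[of r]
  apply (elim disjE)
  by (simp_all add: eval_nat_numeral Phi_def Psi_def spb2_def spb_def cyc3_def cyc3_inv cyc_aux)


lemma lam_rooted:
  assumes "bij \<rho>" and sp: "\<And>x. x \<noteq> 0 \<Longrightarrow> sec b' [x] = rooted (sp x)"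
  shows "lam b' (rooted \<rho>) = rooted (Phi sp \<rho>)"
proof -
  have ol: "orblen (rooted \<rho>) = (LEAST k. 0 < k \<and> (\<rho> ^^ k) 0 = 0)"
    by (simp add: orblen_def rooted_pow lact_rooted)
  have lm: "lam b' (rooted \<rho>) = foldl (\<cdot>) id (map (\<lambda>k. sec b' [(\<rho>^^k) 0]) [1..<orblen (rooted \<rho>)])"
    by (simp add: lam_def rooted_pow lact_rooted)
  have inj: "inj \<rho>" using assms bij_is_inj by auto
  define p where "p = \<rho> 0"
  define q where "q = \<rho> p"
  define r where "r = \<rho> q"
  define s where "s = \<rho> r"
  have f1: "(\<rho>^^1) 0 = p" by (simp add: p_def)
  have f2: "(\<rho>^^2) 0 = q" by (simp add: p_def q_def eval_nat_numeral)
  have f3: "(\<rho>^^3) 0 = r" by (simp add: p_def q_def r_def eval_nat_numeral)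
  have f4: "(\<rho>^^4) 0 = s" by (simp add: p_def q_def r_def s_def eval_nat_numeral)
  have ph: "Phi sp \<rho> = Psi sp p q r" by (simp add: Phi_def p_def q_def r_def)
  have lt4: "y < 4 \<Longrightarrow> 0 < y \<Longrightarrow> y = 1 \<or> y = 2 \<or> y = 3" for y :: nat by auto
  consider "p = 0" | "p \<noteq> 0" "q = 0" | "p \<noteq> 0" "q \<noteq> 0" "r = 0"
    | "p \<noteq> 0" "q \<noteq> 0" "r \<noteq> 0" "s = 0" | "p \<noteq> 0" "q \<noteq> 0" "r \<noteq> 0" "s \<noteq> 0" by blast
  then show ?thesis
  proof cases
    case 1
    have "orblen (rooted \<rho>) = 1" unfolding ol
      by (rule Least_equality) (use f1 1 in auto)
    then show ?thesis using lm 1 ph by (simp add: Psi_def rooted_id)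
  next
    case 2
    have "orblen (rooted \<rho>) = 2" unfolding ol
    proof (rule Least_equality)
      show "0 < (2::nat) \<and> (\<rho> ^^ 2) 0 = 0" using f2 2 by simp
      fix y assume y: "0 < y \<and> (\<rho> ^^ y) 0 = 0"
      have "y \<noteq> 1" using y f1 2 by auto
      then show "2 \<le> y" using y by linarith
    qed
    moreover have "[1..<2] = [1::nat]" by (simp add: upt_rec)
    ultimately show ?thesis using lm 2 ph f1 sp[of p] by (simp add: Psi_def gmul_def)
  next
    case 3
    have "orblen (rooted \<rho>) = 3" unfolding ol
    proof (rule Least_equality)
      show "0 < (3::nat) \<and> (\<rho> ^^ 3) 0 = 0" using f3 3 by simp
      fix y assume y: "0 < y \<and> (\<rho> ^^ y) 0 = 0"
      have "y \<noteq> 1" "y \<noteq> 2" using y f1 f2 3 by auto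
      then show "3 \<le> y" using y by linarith
    qed
    moreover have "[1..<3] = [1,2::nat]" by (simp add: upt_rec)
    ultimately show ?thesis using lm 3 ph f1 f2 sp[of p] sp[of q]
      by (simp add: Psi_def gmul_def rooted_comp)
  next
    case 4
    have "orblen (rooted \<rho>) = 4" unfolding ol
    proof (rule Least_equality)
      show "0 < (4::nat) \<and> (\<rho> ^^ 4) 0 = 0" using f4 4 by simp
      fix y assume y: "0 < y \<and> (\<rho> ^^ y) 0 = 0"
      have "y \<noteq> 1" "y \<noteq> 2" "y \<noteq> 3" using y f1 f2 f3 4 by auto
      then show "4 \<le> y" using y by linarith
    qed
    moreover have "[1..<4] = [1,2,3::nat]" by (simp add: upt_rec)
    ultimately show ?thesis using lm 4 ph f1 f2 f3 sp[of p] sp[of q] sp[of r]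
      by (simp add: Psi_def gmul_def rooted_comp o_assoc)
  next
    case 5
    have d: "distinct [0,p,q,r,s]"
      using 5 inj unfolding p_def q_def r_def s_def by (auto simp: inj_eq)
    have "card (set [0,p,q,r,s]) = 5" using d distinct_card by fastforce
    moreover have "card (set [0,p,q,r,s]) \<le> CARD(letter)" by (rule card_mono) auto
    ultimately show ?thesis by simp
  qed
qed

lemma bij_Psi: "(\<And>x. bij (sp x)) \<Longrightarrow> bij (Psi sp p q r)"
  by (simp add: Psi_def bij_comp)

lemma bij_Phi_pow: "bij \<rho> \<Longrightarrow> (\<And>x. bij (sp x)) \<Longrightarrow> bij ((Phi sp ^^ n) \<rho>)"
  by (cases n) (simp_all add: Phi_def bij_Psi)

lemma lam_iter:
  assumes "bij \<rho>" "\<And>x. x \<noteq> 0 \<Longrightarrow> sec b' [x] = rooted (sp x)" "\<And>x. bij (sp x)"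
  shows "(lam b' ^^ n) (rooted \<rho>) = rooted ((Phi sp ^^ n) \<rho>)"
proof (induct n)
  case 0 then show ?case by simp
next
  case (Suc n)
  then show ?case using lam_rooted[OF bij_Phi_pow[OF assms(1,3)] assms(2)] by simp
qed

lemma Psi_mem: assumes m: "\<And>x. rooted (sp x) \<in> AA" shows "rooted (Psi sp p q r) \<in> AA"
proof -
  have i: "rooted id \<in> AA" using gen.gen_id[of "{s1,s2,s3}"] rooted_id unfolding AA_def by simp
  have c2: "rooted (f \<circ> g) \<in> AA" if "rooted f \<in> AA" "rooted g \<in> AA" for f g
    using that gen_mul[of "rooted g" "{s1,s2,s3}" "rooted f"] unfolding AA_def by (simp add: rooted_mul)
  show ?thesis unfolding Psi_def using i c2 m by auto
qed

lemma part1: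
  assumes sec: "\<And>x. x\<noteq>0 \<Longrightarrow> sec b' [x] = rooted (sp x)" and bsp: "\<And>x. bij (sp x)"
    and mem: "\<And>x. rooted (sp x) \<in> AA"
    and fin: "\<And>p q r. (Phi sp ^^ 6) (Psi sp p q r) = id"
  shows "(\<forall>a\<in>AA. lam b' a \<in> AA) \<and> (\<forall>a\<in>AA. \<exists>n. (lam b' ^^ n) a = id)"
proof safe
  fix a assume "a \<in> AA"
  then obtain \<rho> where r: "bij \<rho>" "a = rooted \<rho>" using AA_rooted by blast
  show "lam b' a \<in> AA" using r lam_rooted[OF r(1) sec] Psi_mem[OF mem] by (simp add: Phi_def)
  have "(lam b' ^^ Suc 6) a = rooted ((Phi sp ^^ Suc 6) \<rho>)" using r lam_iter[OF r(1) sec bsp] by simp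
  also have "(Phi sp ^^ Suc 6) \<rho> = id"
    by (simp only: funpow_Suc_right o_apply Phi_def[of sp \<rho>] fin)
  finally have "(lam b' ^^ Suc 6) a = id" by (simp only: rooted_id)
  then show "\<exists>n. (lam b' ^^ n) a = id" by blast
qed

definition gg :: aut where "gg = bb \<circ> s3 \<circ> bb \<circ> s1 \<circ> s3"
definition kk :: aut where "kk = bb \<circ> s1 \<circ> s3 \<circ> bb \<circ> s3"
definition pp :: aut where "pp = bb \<circ> s3"

lemma gg_eq: "s3 \<cdot> s1 \<cdot> bb \<cdot> s3 \<cdot> bb = gg" by (simp add: gmul_def gg_def o_assoc)

lemma s2s2: "s2 (s2 v) = s3 v"
  by (cases v) (simp_all add: s2_def s3_def cyc3_def)

lemma g0: "gg (0#v) = 2 # s2 (s2 v)" by (simp add: gg_def s1_def s2_def s3_def cyc3_def)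
lemma g2: "gg (2#v) = 3 # s3 (bb v)" by (simp add: gg_def s1_def s2_def s3_def cyc3_def)
lemma g3: "gg (3#v) = 0 # bb (s1 v)" by (simp add: gg_def s1_def s2_def s3_def cyc3_def)

lemma g3pow: "(gg^^3) (0#v) = 0 # kk v"
  by (simp add: eval_nat_numeral g0 g2 g3 kk_def s2s2)

lemma g3m: "(gg^^(3*m)) (0#v) = 0 # (kk^^m) v"
proof (induct m arbitrary: v)
  case 0 then show ?case by simp
next
  case (Suc m)
  have "gg^^(3 * Suc m) = gg^^(3*m) \<circ> gg^^3" by (simp only: funpow_add[symmetric] mult_Suc_right add.commute)
  then show ?case using Suc g3pow by (simp add: funpow_Suc_right del: funpow.simps)
qed

lemma pkm: "pp \<circ> kk^^m = gg^^m \<circ> pp"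
proof (induct m)
  case 0 then show ?case by simp
next
  case (Suc m)
  have pk: "pp \<circ> kk = gg \<circ> pp" by (simp add: pp_def kk_def gg_def o_assoc)
  have "pp \<circ> kk^^Suc m = (pp \<circ> kk) \<circ> kk^^m" by (simp add: funpow_Suc_right o_assoc funpow_swap1)
  also have "\<dots> = gg \<circ> (pp \<circ> kk^^m)" by (simp add: pk o_assoc)
  also have "\<dots> = gg^^Suc m \<circ> pp" by (simp only: Suc funpow.simps(2) o_assoc)
  finally show ?case .
qed

lemma s1cube: "s1 (s1 (s1 v)) = v" by (cases v) (simp_all add: s1_def cyc3_def)
lemma s2cube: "s2 (s2 (s2 v)) = v" by (cases v) (simp_all add: s2_def cyc3_def)
lemma s3cube: "s3 (s3 (s3 v)) = v" by (cases v) (simp_all add: s3_def cyc3_def)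

lemma bbcube: "bb (bb (bb w)) = w"
proof (induct w)
  case Nil then show ?case by simp
next
  case (Cons x v)
  then show ?case using L4[of x] by (auto simp: s1cube s2cube s3cube)
qed

lemma surj_pp: "surj pp"
proof -
  have "surj bb" by (rule surjI[of bb "\<lambda>w. bb (bb w)"]) (rule bbcube)
  moreover have "surj s3" by (rule surjI[of s3 "\<lambda>w. s3 (s3 w)"]) (rule s3cube)
  ultimately show ?thesis unfolding pp_def by (rule comp_surj[rotated])
qed

lemma gg_inf: "0 < n \<Longrightarrow> gg^^n \<noteq> id"
proof (induct n rule: less_induct)
  case (less n)
  show ?case
  proof
    assume H: "gg^^n = id"
    define m where "m = n div 3"
    define j where "j = n mod 3"
    have nj: "n = 3*m + j" "j < 3" unfolding m_def j_def by auto
    consider "j = 0" | "j = 1" | "j = 2" using nj(2) by linarith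
    then show False
    proof cases
      case 1
      then have m0: "0 < m" "m < n" using nj less.prems by auto
      have "(kk^^m) v = v" for v using g3m[of m v] H nj 1 by simp
      then have "kk^^m = id" by auto
      then have "gg^^m \<circ> pp = pp" using pkm[of m] by simp
      then have "gg^^m = id"
      proof -
        assume e: "gg^^m \<circ> pp = pp"
        show ?thesis
        proof
          fix w obtain u where "w = pp u" using surj_pp by (metis surjD)
          then show "(gg^^m) w = id w" using fun_cong[OF e, of u] by simp
        qed
      qed
      then show False using less.hyps[OF m0(2) m0(1)] by simp
    next
      case 2
      have "(gg^^n) [0] = gg ((gg^^(3*m)) (0#[]))" using nj 2 by simp
      also have "\<dots> = 2 # s2 (s2 ((kk^^m) []))" by (simp add: g3m g0)
      finally show False using H by simp
    next
      case 3
      have "(gg^^n) [0] = gg (gg ((gg^^(3*m)) (0#[])))" using nj 3 by (simp add: eval_nat_numeral)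
      also have "\<dots> = 3 # s3 (bb (s2 (s2 ((kk^^m) []))))" by (simp add: g3m g0 g2)
      finally show False using H by simp
    qed
  qed
qed

lemma gg_GG: "gg \<in> GG"
proof -
  have a: "s1 \<in> GG" "s3 \<in> GG" unfolding GG_def AA_def by (auto intro!: gen_gen)
  have b: "bb \<in> GG" unfolding GG_def BB_def by (auto intro!: gen_gen)
  show ?thesis unfolding gg_eq[symmetric] using a b unfolding GG_def by (auto intro!: gen_mul)
qed

theorem mainTheorem13:
  shows "(\<forall>b'\<in>{bb, bb \<cdot> bb}.
            (\<forall>a\<in>AA. lam b' a \<in> AA) \<and>
            (\<forall>a\<in>AA. \<exists>n. (lam b' ^^ n) a = id))
       \<and> (\<forall>n>0. (s3 \<cdot> s1 \<cdot> bb \<cdot> s3 \<cdot> bb) ^^ n \<noteq> id)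
       \<and> \<not> periodic GG"
proof (intro conjI)
  show "\<forall>b'\<in>{bb, bb \<cdot> bb}. (\<forall>a\<in>AA. lam b' a \<in> AA) \<and> (\<forall>a\<in>AA. \<exists>n. (lam b' ^^ n) a = id)"
    using part1[of bb spb, OF sec_bb bij_spb spb_AA fin_b]
      part1[of "bb \<cdot> bb" spb2, OF sec_bb2 bij_spb2 spb2_AA fin_b2] by blast
  show "\<forall>n>0. (s3 \<cdot> s1 \<cdot> bb \<cdot> s3 \<cdot> bb) ^^ n \<noteq> id" using gg_inf by (simp add: gg_eq)
  show "\<not> periodic GG" unfolding periodic_def using gg_GG gg_inf by blast
qed

end
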